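(* Let $(\mathcal A,\lambda_0,S_0)$ be a substitution datum over a dilation datum $(G,d,(D_\lambda)_{\lambda>0},\Gamma,V)$, $D:=D_{\lambda_0}$. Then there is a unique map $S:\mathcal A^{**}_\Gamma\to\mathcal A^{**}_\Gamma$ satisfying: (E1) $S(P_a)=S_0(a)$ for all $a\in\mathcal A$; (E2) for all $\gamma\in\Gamma$ and $P\in\mathcal A^{**}_\Gamma$: $\mathrm{supp}(S(\gamma P))=D(\gamma)\,\mathrm{supp}(S(P))$ and $S(\gamma P)=D(\gamma)S(P)$; (E3) if $(M_i)_{i\in I}$ are subsets of $\Gamma$ with $M=\bigcup_iM_i$ and $P\in\mathcal A^M$, then $\mathrm{supp}(S(P))=\bigcup_i\mathrm{supp}(S(P|_{M_i}))$ and $S(P)(\gamma)=S(P|_{M_i})(\gamma)$ for all $i$ and all $\gamma\in\mathrm{supp}(S(P|_{M_i}))$. This map is the substitution map of Construction below, it satisfies $S^n(\gamma P)=D^n(\gamma)S^n(P)$ for all $P$, $\gamma\in\Gamma$, $n\in\mathbb N$, it maps $\mathcal A^\Gamma$ into $\mathcal A^\Gamma$, and its restriction $S:\mathcal A^\Gamma\to\mathcal A^\Gamma$ is continuous for the product topology.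
   Context: Dilation datum $(G,d,(D_\lambda),\Gamma,V)$: $G$ connected lcsc group, $d$ left-invariant metric inducing the topology, $\lambda\mapsto D_\lambda$ homomorphism $(\mathbb R_{>0},\cdot)\to\mathrm{Aut}(G)$ with $d(D_\lambda g,D_\lambda h)=\lambda d(g,h)$; $\Gamma$ uniform lattice with $D_\lambda(\Gamma)\subset\Gamma$ for some $\lambda>1$; $V$ bounded Borel set containing an open identity neighbourhood with $G=\bigsqcup_{\gamma\in\Gamma}\gamma V$. Substitution datum $(\mathcal A,\lambda_0,S_0)$: finite $\mathcal A$; $\lambda_0>1+r_+/r_-$ for some $0<r_-<r_+$ with $B(e,r_-)\subset V\subset B(e,r_+)$; $D_{\lambda_0}(\Gamma)\subset\Gamma$; $S_0:\mathcal A\to\mathcal A^{D(V)\cap\Gamma}$. A patch is $P\in\mathcal A^M$ for some $M\subset\Gamma$, $\mathrm{supp}(P)=M$; $\mathcal A^{**}_\Gamma$ is the set of all patches; $P_a$ has support $\{e\}$ and value $a$; $\Gamma$ acts by $\mathrm{supp}(\gamma P)=\gamma\,\mathrm{supp}(P)$, $(\gamma P)(x)=P(\gamma^{-1}x)$; $P|_M$ is the restriction to $\mathrm{supp}(P)\cap M$. Construction: for $P$ with support $M$, $\mathrm{supp}(S(P))=D(MV)\cap\Gamma$, and for $\gamma$ in it, with the unique $\eta\in M$ such that $\gamma\in D(\eta)(D(V)\cap\Gamma)$, $S(P)(\gamma):=S_0(P(\eta))(D(\eta)^{-1}\gamma)$. *)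

theory Defs
  imports "HOL-Analysis.Analysis"
begin

text \<open>The group G is a type 'g of class group_add (NOT assumed commutative), written
additively: x + y is the group product, 0 the identity e, -x the inverse.
A patch is a partial map 'g \<Rightarrow> 'a option; its support is its domain.\<close>

definition topological_group :: "'g::{metric_space,group_add} itself \<Rightarrow> bool" where
  "topological_group _ \<longleftrightarrow>
     continuous_on UNIV (\<lambda>p::'g \<times> 'g. fst p + snd p) \<and> continuous_on UNIV (uminus :: 'g \<Rightarrow> 'g)"

definition uniform_lattice :: "'g::{metric_space,group_add} set \<Rightarrow> bool" where
  "uniform_lattice \<Gamma> \<longleftrightarrow>
     0 \<in> \<Gamma> \<and> (\<forall>x\<in>\<Gamma>. \<forall>y\<in>\<Gamma>. x + y \<in> \<Gamma>) \<and> (\<forall>x\<in>\<Gamma>. - x \<in> \<Gamma>) \<and>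
     (\<forall>\<gamma>\<in>\<Gamma>. \<exists>e>0. \<Gamma> \<inter> ball \<gamma> e = {\<gamma>}) \<and>
     (\<exists>K. compact K \<and> (\<Union>\<gamma>\<in>\<Gamma>. (+) \<gamma> ` K) = UNIV)"

definition dilation_datum ::
  "(real \<Rightarrow> 'g::{metric_space,group_add} \<Rightarrow> 'g) \<Rightarrow> 'g set \<Rightarrow> 'g set \<Rightarrow> bool" where
  "dilation_datum D \<Gamma> V \<longleftrightarrow>
     \<comment> \<open>G connected lcsc group, metric left-invariant (topology is the metric topology)\<close>
     topological_group TYPE('g) \<and>
     connected (UNIV :: 'g set) \<and>
     locally_compact_space (euclidean :: 'g topology) \<and>
     second_countable (euclidean :: 'g topology) \<and>
     (\<forall>g x y :: 'g. dist (g + x) (g + y) = dist x y) \<and>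
     \<comment> \<open>l \<mapsto> D l is a homomorphism (R_{>0},*) \<rightarrow> Aut(G), scaling the metric\<close>
     (\<forall>l>0. bij (D l) \<and> (\<forall>x y. D l (x + y) = D l x + D l y)
            \<and> continuous_on UNIV (D l) \<and> continuous_on UNIV (inv (D l))) \<and>
     D 1 = id \<and>
     (\<forall>l>0. \<forall>m>0. D (l * m) = D l \<circ> D m) \<and>
     (\<forall>l>0. \<forall>g h. dist (D l g) (D l h) = l * dist g h) \<and>
     \<comment> \<open>uniform lattice, invariant under some expanding dilation\<close>
     uniform_lattice \<Gamma> \<and>
     (\<exists>l>1. D l ` \<Gamma> \<subseteq> \<Gamma>) \<and>
     \<comment> \<open>V bounded Borel, contains an open identity neighbourhood, G = disjoint union of \<gamma> V\<close>
     bounded V \<and> V \<in> sets borel \<and>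
     (\<exists>U. open U \<and> 0 \<in> U \<and> U \<subseteq> V) \<and>
     (\<forall>g. \<exists>!\<gamma>. \<gamma> \<in> \<Gamma> \<and> g \<in> (+) \<gamma> ` V)"

definition patches :: "'a set \<Rightarrow> 'g set \<Rightarrow> ('g \<Rightarrow> 'a option) set" where
  "patches A \<Gamma> = {P. dom P \<subseteq> \<Gamma> \<and> ran P \<subseteq> A}"

definition patches_on :: "'a set \<Rightarrow> 'g set \<Rightarrow> ('g \<Rightarrow> 'a option) set" where
  "patches_on A M = {P. dom P = M \<and> ran P \<subseteq> A}"

definition single_patch :: "'a \<Rightarrow> 'g::group_add \<Rightarrow> 'a option" where
  "single_patch a = [0 \<mapsto> a]"

definition act :: "'g::group_add \<Rightarrow> ('g \<Rightarrow> 'a option) \<Rightarrow> ('g \<Rightarrow> 'a option)" where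
  "act \<gamma> P = (\<lambda>x. P (- \<gamma> + x))"

definition substitution_datum ::
  "(real \<Rightarrow> 'g::{metric_space,group_add} \<Rightarrow> 'g) \<Rightarrow> 'g set \<Rightarrow> 'g set \<Rightarrow>
   'a set \<Rightarrow> real \<Rightarrow> ('a \<Rightarrow> 'g \<Rightarrow> 'a option) \<Rightarrow> bool" where
  "substitution_datum D \<Gamma> V A l0 S0 \<longleftrightarrow>
     dilation_datum D \<Gamma> V \<and> finite A \<and>
     (\<exists>rm rp. 0 < rm \<and> rm < rp \<and> ball 0 rm \<subseteq> V \<and> V \<subseteq> ball 0 rp \<and> l0 > 1 + rp / rm) \<and>
     D l0 ` \<Gamma> \<subseteq> \<Gamma> \<and>
     (\<forall>a\<in>A. S0 a \<in> patches_on A (D l0 ` V \<inter> \<Gamma>))"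

definition construction ::
  "(real \<Rightarrow> 'g::{metric_space,group_add} \<Rightarrow> 'g) \<Rightarrow> 'g set \<Rightarrow> 'g set \<Rightarrow> real \<Rightarrow>
   ('a \<Rightarrow> 'g \<Rightarrow> 'a option) \<Rightarrow> ('g \<Rightarrow> 'a option) \<Rightarrow> ('g \<Rightarrow> 'a option)" where
  "construction D \<Gamma> V l0 S0 P = (\<lambda>\<gamma>.
     if \<gamma> \<in> D l0 ` (\<Union>\<eta>\<in>dom P. (+) \<eta> ` V) \<inter> \<Gamma> then
       (let \<eta> = (THE \<eta>. \<eta> \<in> dom P \<and> \<gamma> \<in> (+) (D l0 \<eta>) ` (D l0 ` V \<inter> \<Gamma>))
        in S0 (the (P \<eta>)) (- (D l0 \<eta>) + \<gamma>))
     else None)"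

text \<open>Identification of A^\<Gamma> (patches with support \<Gamma>) with the product space
  PiE \<Gamma> (\<lambda>_. A) carrying the product of discrete topologies.\<close>
definition cfg_of :: "'g set \<Rightarrow> ('g \<Rightarrow> 'a) \<Rightarrow> ('g \<Rightarrow> 'a option)" where
  "cfg_of \<Gamma> x = (\<lambda>\<eta>. if \<eta> \<in> \<Gamma> then Some (x \<eta>) else None)"

definition pts_of :: "'g set \<Rightarrow> ('g \<Rightarrow> 'a option) \<Rightarrow> ('g \<Rightarrow> 'a)" where
  "pts_of \<Gamma> P = restrict (\<lambda>\<eta>. the (P \<eta>)) \<Gamma>"

definition config_topology :: "'a set \<Rightarrow> 'g set \<Rightarrow> ('g \<Rightarrow> 'a) topology" where
  "config_topology A \<Gamma> = product_topology (\<lambda>_. discrete_topology A) \<Gamma>"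

definition subst_props ::
  "(real \<Rightarrow> 'g::{metric_space,group_add} \<Rightarrow> 'g) \<Rightarrow> 'g set \<Rightarrow> 'a set \<Rightarrow> real \<Rightarrow>
   ('a \<Rightarrow> 'g \<Rightarrow> 'a option) \<Rightarrow> (('g \<Rightarrow> 'a option) \<Rightarrow> ('g \<Rightarrow> 'a option)) \<Rightarrow> bool" where
  "subst_props D \<Gamma> A l0 S0 S \<longleftrightarrow>
     (\<forall>P\<in>patches A \<Gamma>. S P \<in> patches A \<Gamma>) \<and>
     \<comment> \<open>(E1)\<close>
     (\<forall>a\<in>A. S (single_patch a) = S0 a) \<and>
     \<comment> \<open>(E2)\<close>
     (\<forall>\<gamma>\<in>\<Gamma>. \<forall>P\<in>patches A \<Gamma>.
        dom (S (act \<gamma> P)) = (+) (D l0 \<gamma>) ` dom (S P) \<and>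
        S (act \<gamma> P) = act (D l0 \<gamma>) (S P)) \<and>
     \<comment> \<open>(E3): family (M_i) rendered as a set Ms of subsets of \<Gamma>\<close>
     (\<forall>Ms. (\<forall>M\<in>Ms. M \<subseteq> \<Gamma>) \<longrightarrow>
        (\<forall>P\<in>patches_on A (\<Union>Ms).
           dom (S P) = (\<Union>M\<in>Ms. dom (S (P |` M))) \<and>
           (\<forall>M\<in>Ms. \<forall>\<gamma>\<in>dom (S (P |` M)). S P \<gamma> = S (P |` M) \<gamma>)))"

end

theory Submission
  imports Defs
begin

locale sd =
  fixes D0 :: "'g::group_add \<Rightarrow> 'g" and \<Gamma> V :: "'g set" and A :: "'a set"
    and S0 :: "'a \<Rightarrow> 'g \<Rightarrow> 'a option"
  assumes Dadd: "\<And>x y. D0 (x + y) = D0 x + D0 y"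
    and Dbij: "bij D0"
    and D\<Gamma>: "D0 ` \<Gamma> \<subseteq> \<Gamma>"
    and \<Gamma>0: "0 \<in> \<Gamma>" and \<Gamma>add: "\<And>x y. x \<in> \<Gamma> \<Longrightarrow> y \<in> \<Gamma> \<Longrightarrow> x + y \<in> \<Gamma>"
    and \<Gamma>neg: "\<And>x. x \<in> \<Gamma> \<Longrightarrow> - x \<in> \<Gamma>"
    and tile: "\<And>g. \<exists>!\<gamma>. \<gamma> \<in> \<Gamma> \<and> g \<in> (+) \<gamma> ` V"
    and S0: "\<And>a. a \<in> A \<Longrightarrow> S0 a \<in> patches_on A (D0 ` V \<inter> \<Gamma>)"
begin

definition constr where
  "constr P = (\<lambda>\<gamma>.
     if \<gamma> \<in> D0 ` (\<Union>\<eta>\<in>dom P. (+) \<eta> ` V) \<inter> \<Gamma> then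
       (let \<eta> = (THE \<eta>. \<eta> \<in> dom P \<and> \<gamma> \<in> (+) (D0 \<eta>) ` (D0 ` V \<inter> \<Gamma>))
        in S0 (the (P \<eta>)) (- (D0 \<eta>) + \<gamma>))
     else None)"

definition cell where "cell \<eta> = (+) (D0 \<eta>) ` (D0 ` V \<inter> \<Gamma>)"

lemma D0_0: "D0 0 = 0"
proof -
  have "D0 0 + D0 0 = D0 0 + 0" using Dadd[of 0 0] by simp
  thus ?thesis by (simp only: add_left_cancel)
qed

lemma Dinj: "inj D0" using bij_is_inj[OF Dbij] .
lemma Dsurj: "surj D0" using bij_is_surj[OF Dbij] .

lemma cell_uniq:
  assumes "\<eta>1 \<in> \<Gamma>" "\<eta>2 \<in> \<Gamma>" "x \<in> cell \<eta>1" "x \<in> cell \<eta>2"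
  shows "\<eta>1 = \<eta>2"
proof -
  obtain v1 where v1: "v1 \<in> V" "x = D0 \<eta>1 + D0 v1" using assms(3) unfolding cell_def by auto
  obtain v2 where v2: "v2 \<in> V" "x = D0 \<eta>2 + D0 v2" using assms(4) unfolding cell_def by auto
  have "D0 (\<eta>1 + v1) = D0 (\<eta>2 + v2)" using v1 v2 by (simp add: Dadd)
  hence e: "\<eta>1 + v1 = \<eta>2 + v2" using Dinj by (simp add: inj_eq)
  from tile[of "\<eta>1 + v1"] have "\<exists>!\<gamma>. \<gamma> \<in> \<Gamma> \<and> \<eta>1 + v1 \<in> (+) \<gamma> ` V" .
  moreover have "\<eta>1 \<in> \<Gamma> \<and> \<eta>1 + v1 \<in> (+) \<eta>1 ` V" using assms v1 by auto
  moreover have "\<eta>2 \<in> \<Gamma> \<and> \<eta>1 + v1 \<in> (+) \<eta>2 ` V" using assms v2 e by auto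
  ultimately show ?thesis by blast
qed

lemma cell_sub: "\<eta> \<in> \<Gamma> \<Longrightarrow> cell \<eta> \<subseteq> \<Gamma>"
  unfolding cell_def using D\<Gamma> \<Gamma>add by auto

lemma cond_iff:
  assumes "dom P \<subseteq> \<Gamma>"
  shows "(\<gamma> \<in> D0 ` (\<Union>\<eta>\<in>dom P. (+) \<eta> ` V) \<inter> \<Gamma>) \<longleftrightarrow> (\<exists>\<eta>\<in>dom P. \<gamma> \<in> cell \<eta>)"
proof
  assume "\<gamma> \<in> D0 ` (\<Union>\<eta>\<in>dom P. (+) \<eta> ` V) \<inter> \<Gamma>"
  then obtain \<eta> v where h: "\<eta> \<in> dom P" "v \<in> V" "\<gamma> = D0 (\<eta> + v)" "\<gamma> \<in> \<Gamma>" by auto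
  have g: "\<gamma> = D0 \<eta> + D0 v" using h by (simp add: Dadd)
  have "D0 \<eta> \<in> \<Gamma>" using h assms D\<Gamma> by auto
  hence "- D0 \<eta> + \<gamma> \<in> \<Gamma>" using h \<Gamma>add \<Gamma>neg by auto
  moreover have "- D0 \<eta> + \<gamma> = D0 v" using g by (simp add: add.assoc[symmetric])
  ultimately have "D0 v \<in> D0 ` V \<inter> \<Gamma>" using h by auto
  hence "\<gamma> \<in> cell \<eta>" unfolding cell_def using g by (metis image_eqI)
  thus "\<exists>\<eta>\<in>dom P. \<gamma> \<in> cell \<eta>" using h by blast
next
  assume "\<exists>\<eta>\<in>dom P. \<gamma> \<in> cell \<eta>"
  then obtain \<eta> v where h: "\<eta> \<in> dom P" "v \<in> V" "D0 v \<in> \<Gamma>" "\<gamma> = D0 \<eta> + D0 v"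
    unfolding cell_def by auto
  have "\<gamma> \<in> \<Gamma>" using h assms D\<Gamma> \<Gamma>add by auto
  moreover have "\<gamma> = D0 (\<eta> + v)" using h by (simp add: Dadd)
  ultimately show "\<gamma> \<in> D0 ` (\<Union>\<eta>\<in>dom P. (+) \<eta> ` V) \<inter> \<Gamma>" using h by auto
qed

lemma constr_val:
  assumes "dom P \<subseteq> \<Gamma>" "\<eta> \<in> dom P" "\<delta> \<in> D0 ` V \<inter> \<Gamma>"
  shows "constr P (D0 \<eta> + \<delta>) = S0 (the (P \<eta>)) \<delta>"
proof -
  have c: "D0 \<eta> + \<delta> \<in> cell \<eta>" using assms(3) unfolding cell_def by (rule imageI)
  have th: "(THE \<eta>'. \<eta>' \<in> dom P \<and> D0 \<eta> + \<delta> \<in> (+) (D0 \<eta>') ` (D0 ` V \<inter> \<Gamma>)) = \<eta>"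
  proof (rule the_equality)
    show "\<eta> \<in> dom P \<and> D0 \<eta> + \<delta> \<in> (+) (D0 \<eta>) ` (D0 ` V \<inter> \<Gamma>)"
      using assms(2) c unfolding cell_def by (rule conjI)
    fix \<eta>' assume h: "\<eta>' \<in> dom P \<and> D0 \<eta> + \<delta> \<in> (+) (D0 \<eta>') ` (D0 ` V \<inter> \<Gamma>)"
    hence "D0 \<eta> + \<delta> \<in> cell \<eta>'" unfolding cell_def by (rule conjunct2)
    moreover have "\<eta>' \<in> \<Gamma>" "\<eta> \<in> \<Gamma>" using h assms(1,2) by blast+
    ultimately show "\<eta>' = \<eta>" using c cell_uniq by blast
  qed
  have cond: "D0 \<eta> + \<delta> \<in> D0 ` (\<Union>\<eta>\<in>dom P. (+) \<eta> ` V) \<inter> \<Gamma>"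
  proof (rule iffD2[OF cond_iff[OF assms(1)]])
    show "\<exists>\<eta>'\<in>dom P. D0 \<eta> + \<delta> \<in> cell \<eta>'" using c assms(2) by (rule bexI)
  qed
  have m: "- D0 \<eta> + (D0 \<eta> + \<delta>) = \<delta>" by (simp add: add.assoc[symmetric])
  show ?thesis unfolding constr_def if_P[OF cond] Let_def th m ..
qed

lemma constr_none:
  assumes "dom P \<subseteq> \<Gamma>" "\<not> (\<exists>\<eta>\<in>dom P. \<gamma> \<in> cell \<eta>)"
  shows "constr P \<gamma> = None"
proof -
  have nc: "\<gamma> \<notin> D0 ` (\<Union>\<eta>\<in>dom P. (+) \<eta> ` V) \<inter> \<Gamma>"
  proof
    assume "\<gamma> \<in> D0 ` (\<Union>\<eta>\<in>dom P. (+) \<eta> ` V) \<inter> \<Gamma>"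
    hence "\<exists>\<eta>\<in>dom P. \<gamma> \<in> cell \<eta>" by (rule iffD1[OF cond_iff[OF assms(1)]])
    with assms(2) show False by (rule notE)
  qed
  show ?thesis unfolding constr_def if_not_P[OF nc] ..
qed

lemma dom_constr:
  assumes "P \<in> patches A \<Gamma>"
  shows "dom (constr P) = (\<Union>\<eta>\<in>dom P. cell \<eta>)"
proof (intro set_eqI iffI)
  have dP: "dom P \<subseteq> \<Gamma>" using assms by (simp add: patches_def)
  fix x assume x: "x \<in> dom (constr P)"
  show "x \<in> (\<Union>\<eta>\<in>dom P. cell \<eta>)"
  proof (rule ccontr)
    assume "x \<notin> (\<Union>\<eta>\<in>dom P. cell \<eta>)"
    hence "\<not> (\<exists>\<eta>\<in>dom P. x \<in> cell \<eta>)" by blast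
    hence "constr P x = None" by (rule constr_none[OF dP])
    thus False using x by (simp add: domIff)
  qed
next
  have dP: "dom P \<subseteq> \<Gamma>" using assms by (simp add: patches_def)
  fix x assume "x \<in> (\<Union>\<eta>\<in>dom P. cell \<eta>)"
  then obtain \<eta> \<delta> where h: "\<eta> \<in> dom P" "\<delta> \<in> D0 ` V \<inter> \<Gamma>" "x = D0 \<eta> + \<delta>"
    unfolding cell_def by blast
  obtain a where a: "P \<eta> = Some a" using h by blast
  have "a \<in> A" using a assms unfolding patches_def ran_def by blast
  hence "\<delta> \<in> dom (S0 a)" using S0 h unfolding patches_on_def by blast
  thus "x \<in> dom (constr P)" using constr_val[OF dP h(1,2)] h(3) a by (simp add: domIff)
qed

lemma constr_patches:
  assumes "P \<in> patches A \<Gamma>"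
  shows "constr P \<in> patches A \<Gamma>"
proof -
  have d: "dom P \<subseteq> \<Gamma>" using assms unfolding patches_def by auto
  have "dom (constr P) \<subseteq> \<Gamma>" using dom_constr[OF assms] cell_sub d by blast
  moreover have "ran (constr P) \<subseteq> A"
  proof
    fix b assume "b \<in> ran (constr P)"
    then obtain x where x: "constr P x = Some b" unfolding ran_def by auto
    then have "x \<in> dom (constr P)" by blast
    then have "x \<in> (\<Union>\<eta>\<in>dom P. cell \<eta>)" using dom_constr[OF assms] by simp
    then obtain \<eta> \<delta> where h: "\<eta> \<in> dom P" "\<delta> \<in> D0 ` V \<inter> \<Gamma>" "x = D0 \<eta> + \<delta>"
      unfolding cell_def by auto
    obtain a where a: "P \<eta> = Some a" using h by auto
    have "a \<in> A" using a assms unfolding patches_def ran_def by auto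
    have "S0 a \<delta> = Some b" using x constr_val[OF d h(1,2)] h a by simp
    thus "b \<in> A" using S0[OF \<open>a \<in> A\<close>] unfolding patches_on_def ran_def by auto
  qed
  ultimately show ?thesis unfolding patches_def by auto
qed

lemma single_patches: "a \<in> A \<Longrightarrow> single_patch a \<in> patches A \<Gamma>"
  unfolding patches_def single_patch_def using \<Gamma>0 by auto

lemma E1: assumes "a \<in> A" shows "constr (single_patch a) = S0 a"
proof
  fix x
  have d: "dom (single_patch a) \<subseteq> \<Gamma>" "dom (single_patch a :: 'g \<Rightarrow> 'a option) = {0}"
    unfolding single_patch_def using \<Gamma>0 by auto
  have ds: "dom (S0 a) = D0 ` V \<inter> \<Gamma>" using S0[OF assms] unfolding patches_on_def by auto
  show "constr (single_patch a) x = S0 a x"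
  proof (cases "x \<in> D0 ` V \<inter> \<Gamma>")
    case True
    have "constr (single_patch a) (D0 0 + x) = S0 (the (single_patch a (0::'g))) x"
    proof -
      have "0 \<in> dom (single_patch a)" by (simp add: single_patch_def)
      from constr_val[OF d(1) this True] show ?thesis by simp
    qed
    thus ?thesis by (simp add: D0_0 single_patch_def)
  next
    case False
    have "\<not> (\<exists>\<eta>\<in>dom (single_patch a). x \<in> cell \<eta>)"
    proof
      assume "\<exists>\<eta>\<in>dom (single_patch a). x \<in> cell \<eta>"
      hence "x \<in> cell 0" using d(2) by simp
      thus False using False unfolding cell_def D0_0 by auto
    qed
    hence "constr (single_patch a) x = None" using constr_none d(1) by blast
    thus ?thesis using False ds by auto
  qed
qed

lemma dom_act: "dom (act g f) = (+) g ` dom f"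
proof (intro set_eqI iffI)
  fix x assume "x \<in> dom (act g f)"
  hence "- g + x \<in> dom f" unfolding act_def by auto
  moreover have "x = g + (- g + x)" by (simp add: add.assoc[symmetric])
  ultimately show "x \<in> (+) g ` dom f" by blast
qed (auto simp: act_def add.assoc[symmetric])

lemma act_patches: "\<gamma> \<in> \<Gamma> \<Longrightarrow> P \<in> patches A \<Gamma> \<Longrightarrow> act \<gamma> P \<in> patches A \<Gamma>"
proof -
  assume g: "\<gamma> \<in> \<Gamma>" and P: "P \<in> patches A \<Gamma>"
  have "dom (act \<gamma> P) \<subseteq> \<Gamma>" unfolding dom_act using g P \<Gamma>add unfolding patches_def by auto
  moreover have "ran (act \<gamma> P) \<subseteq> ran P" unfolding act_def ran_def by auto
  ultimately show ?thesis using P unfolding patches_def by auto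
qed

lemma E2:
  assumes g: "\<gamma> \<in> \<Gamma>" and P: "P \<in> patches A \<Gamma>"
  shows "constr (act \<gamma> P) = act (D0 \<gamma>) (constr P)"
proof
  fix x
  have d: "dom P \<subseteq> \<Gamma>" using P unfolding patches_def by auto
  have d': "dom (act \<gamma> P) \<subseteq> \<Gamma>" using act_patches[OF g P] unfolding patches_def by auto
  show "constr (act \<gamma> P) x = act (D0 \<gamma>) (constr P) x"
  proof (cases "\<exists>\<eta>\<in>dom P. - D0 \<gamma> + x \<in> cell \<eta>")
    case True
    then obtain \<eta> \<delta> where h: "\<eta> \<in> dom P" "\<delta> \<in> D0 ` V \<inter> \<Gamma>" "- D0 \<gamma> + x = D0 \<eta> + \<delta>"
      unfolding cell_def by auto
    have x: "x = D0 (\<gamma> + \<eta>) + \<delta>"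
    proof -
      have "x = D0 \<gamma> + (- D0 \<gamma> + x)" by (simp add: add.assoc[symmetric])
      also have "\<dots> = D0 (\<gamma> + \<eta>) + \<delta>" using h(3) by (simp add: Dadd add.assoc)
      finally show ?thesis .
    qed
    have e: "act \<gamma> P (\<gamma> + \<eta>) = P \<eta>" unfolding act_def by (simp add: add.assoc[symmetric])
    have m: "\<gamma> + \<eta> \<in> dom (act \<gamma> P)" using e h by auto
    have "constr (act \<gamma> P) x = S0 (the (P \<eta>)) \<delta>"
      using constr_val[OF d' m h(2)] x e by simp
    moreover have "act (D0 \<gamma>) (constr P) x = S0 (the (P \<eta>)) \<delta>"
      unfolding act_def h(3) using constr_val[OF d h(1,2)] by simp
    ultimately show ?thesis by simp
  next
    case False
    have r: "act (D0 \<gamma>) (constr P) x = None"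
      unfolding act_def using constr_none[OF d False] .
    have "\<not> (\<exists>\<eta>'\<in>dom (act \<gamma> P). x \<in> cell \<eta>')"
    proof
      assume "\<exists>\<eta>'\<in>dom (act \<gamma> P). x \<in> cell \<eta>'"
      then obtain \<eta>' \<delta> where h: "\<eta>' \<in> dom (act \<gamma> P)" "\<delta> \<in> D0 ` V \<inter> \<Gamma>" "x = D0 \<eta>' + \<delta>"
        unfolding cell_def by auto
      have "- \<gamma> + \<eta>' \<in> dom P" using h(1) unfolding act_def by auto
      moreover have "- D0 \<gamma> + x = D0 (- \<gamma> + \<eta>') + \<delta>"
      proof -
        have "D0 (- \<gamma>) = - D0 \<gamma>" using Dadd[of "-\<gamma>" \<gamma>] D0_0
          by (metis add.left_inverse minus_unique)
        thus ?thesis using h(3) by (simp add: Dadd add.assoc)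
      qed
      ultimately show False using False h(2) unfolding cell_def by auto
    qed
    hence "constr (act \<gamma> P) x = None" using constr_none[OF d'] by blast
    thus ?thesis using r by simp
  qed
qed

lemma E3:
  assumes Ms: "\<forall>M\<in>Ms. M \<subseteq> \<Gamma>" and P: "P \<in> patches_on A (\<Union>Ms)"
  shows "dom (constr P) = (\<Union>M\<in>Ms. dom (constr (P |` M)))"
    and "\<forall>M\<in>Ms. \<forall>\<gamma>\<in>dom (constr (P |` M)). constr P \<gamma> = constr (P |` M) \<gamma>"
proof -
  have P': "P \<in> patches A \<Gamma>" using Ms P unfolding patches_on_def patches_def by auto
  have dP: "dom P = \<Union>Ms" using P unfolding patches_on_def by auto
  have PM: "P |` M \<in> patches A \<Gamma>" for M
    using P' unfolding patches_def ran_def by (auto simp: restrict_map_def split: if_splits)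
  show "dom (constr P) = (\<Union>M\<in>Ms. dom (constr (P |` M)))"
    unfolding dom_constr[OF P'] dom_constr[OF PM] using dP by auto
  show "\<forall>M\<in>Ms. \<forall>\<gamma>\<in>dom (constr (P |` M)). constr P \<gamma> = constr (P |` M) \<gamma>"
  proof (intro ballI)
    fix M \<gamma> assume M: "M \<in> Ms" and "\<gamma> \<in> dom (constr (P |` M))"
    then obtain \<eta> \<delta> where h: "\<eta> \<in> dom (P |` M)" "\<delta> \<in> D0 ` V \<inter> \<Gamma>" "\<gamma> = D0 \<eta> + \<delta>"
      unfolding dom_constr[OF PM] cell_def by auto
    have d1: "dom (P |` M) \<subseteq> \<Gamma>" and d2: "dom P \<subseteq> \<Gamma>" using PM P' unfolding patches_def by auto
    have "\<eta> \<in> M" "\<eta> \<in> dom P" using h(1) by auto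
    thus "constr P \<gamma> = constr (P |` M) \<gamma>"
      using constr_val[OF d1 h(1,2)] constr_val[OF d2 _ h(2)] h(3) by simp
  qed
qed

lemma cover: assumes "k \<in> \<Gamma>" shows "\<exists>\<eta>\<in>\<Gamma>. k \<in> cell \<eta>"
proof -
  obtain y where y: "k = D0 y" using surjD[OF Dsurj] by blast
  obtain \<eta> where h0: "\<eta> \<in> \<Gamma> \<and> y \<in> (+) \<eta> ` V" using tile[of y] by (rule ex1E)
  then obtain v where h: "\<eta> \<in> \<Gamma>" "v \<in> V" "y = \<eta> + v" by blast
  have k: "k = D0 \<eta> + D0 v" using y h(3) by (simp add: Dadd)
  have "- D0 \<eta> + k = D0 v" using k by (simp add: add.assoc[symmetric])
  moreover have "- D0 \<eta> + k \<in> \<Gamma>"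
  proof (rule \<Gamma>add)
    show "- D0 \<eta> \<in> \<Gamma>" using h(1) D\<Gamma> \<Gamma>neg by blast
  qed (rule assms)
  ultimately have mem: "D0 v \<in> D0 ` V \<inter> \<Gamma>" using h(2) by simp
  have "k \<in> cell \<eta>" unfolding cell_def by (rule image_eqI[where f="(+) (D0 \<eta>)", OF k mem])
  thus ?thesis using h(1) by (rule bexI)
qed

lemma full: assumes "P \<in> patches_on A \<Gamma>" shows "constr P \<in> patches_on A \<Gamma>"
proof -
  have dP: "dom P = \<Gamma>" using assms by (simp add: patches_on_def)
  have P: "P \<in> patches A \<Gamma>" using assms unfolding patches_on_def patches_def by simp
  have "dom (constr P) = \<Gamma>" unfolding dom_constr[OF P] dP
  proof
    show "(\<Union>\<eta>\<in>\<Gamma>. cell \<eta>) \<subseteq> \<Gamma>" using cell_sub by blast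
    show "\<Gamma> \<subseteq> (\<Union>\<eta>\<in>\<Gamma>. cell \<eta>)" using cover by blast
  qed
  moreover have "ran (constr P) \<subseteq> A" using constr_patches[OF P] by (simp add: patches_def)
  ultimately show ?thesis unfolding patches_on_def by simp
qed

lemma cont: "continuous_map (config_topology A \<Gamma>) (config_topology A \<Gamma>) (pts_of \<Gamma> \<circ> constr \<circ> cfg_of \<Gamma>)"
  unfolding config_topology_def continuous_map_componentwise
proof (intro conjI ballI)
  show "(pts_of \<Gamma> \<circ> constr \<circ> cfg_of \<Gamma>) ` topspace (product_topology (\<lambda>_. discrete_topology A) \<Gamma>) \<subseteq> extensional \<Gamma>"
    unfolding pts_of_def comp_def by (rule image_subsetI) (rule restrict_extensional)
  fix k assume k: "k \<in> \<Gamma>"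
  obtain \<eta> where h0: "\<eta> \<in> \<Gamma>" "k \<in> cell \<eta>" using cover[OF k] by blast
  then obtain \<delta> where h: "\<eta> \<in> \<Gamma>" "\<delta> \<in> D0 ` V \<inter> \<Gamma>" "k = D0 \<eta> + \<delta>"
    unfolding cell_def by blast
  have c1: "continuous_map (product_topology (\<lambda>_. discrete_topology A) \<Gamma>) (discrete_topology A)
      ((\<lambda>a. the (S0 a \<delta>)) \<circ> (\<lambda>x. x \<eta>))"
  proof (rule continuous_map_compose)
    show "continuous_map (product_topology (\<lambda>_. discrete_topology A) \<Gamma>) (discrete_topology A) (\<lambda>x. x \<eta>)"
      using continuous_map_product_projection[OF h(1), of "\<lambda>_. discrete_topology A"] by simp
    show "continuous_map (discrete_topology A) (discrete_topology A) (\<lambda>a. the (S0 a \<delta>))"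
      unfolding continuous_map_from_discrete_topology topspace_discrete_topology
    proof (rule Pi_I)
      fix a assume a: "a \<in> A"
      have ds: "dom (S0 a) = D0 ` V \<inter> \<Gamma>" "ran (S0 a) \<subseteq> A" using S0[OF a] by (simp_all add: patches_on_def)
      have "\<delta> \<in> dom (S0 a)" using ds(1) h(2) by simp
      then obtain b where b: "S0 a \<delta> = Some b" by blast
      hence "b \<in> ran (S0 a)" by (rule ranI)
      thus "the (S0 a \<delta>) \<in> A" using ds(2) b by auto
    qed
  qed
  show "continuous_map (product_topology (\<lambda>_. discrete_topology A) \<Gamma>) (discrete_topology A)
          (\<lambda>x. (pts_of \<Gamma> \<circ> constr \<circ> cfg_of \<Gamma>) x k)"
  proof (rule continuous_map_eq[OF c1])
    fix x assume "x \<in> topspace (product_topology (\<lambda>_. discrete_topology A) \<Gamma>)"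
    have d: "dom (cfg_of \<Gamma> x) \<subseteq> \<Gamma>" "\<eta> \<in> dom (cfg_of \<Gamma> x)"
      using h(1) by (auto simp: cfg_of_def domIff split: if_splits)
    show "((\<lambda>a. the (S0 a \<delta>)) \<circ> (\<lambda>x. x \<eta>)) x = (\<lambda>x. (pts_of \<Gamma> \<circ> constr \<circ> cfg_of \<Gamma>) x k) x"
    proof -
      have "(pts_of \<Gamma> \<circ> constr \<circ> cfg_of \<Gamma>) x k = the (constr (cfg_of \<Gamma> x) k)"
        using k by (simp add: pts_of_def)
      also have "\<dots> = the (S0 (the (cfg_of \<Gamma> x \<eta>)) \<delta>)"
        using constr_val[OF d h(2)] h(3) by simp
      also have "\<dots> = the (S0 (x \<eta>) \<delta>)" using h(1) by (simp add: cfg_of_def)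
      finally show ?thesis by simp
    qed
  qed
qed

end

lemma sp_pat: assumes "subst_props D \<Gamma> A l0 S0 S" "P \<in> patches A \<Gamma>" shows "S P \<in> patches A \<Gamma>"
  using assms(1)[unfolded subst_props_def, THEN conjunct1] assms(2) by (rule bspec)
lemma sp_E1: assumes "subst_props D \<Gamma> A l0 S0 S" "a \<in> A" shows "S (single_patch a) = S0 a"
  using assms(1)[unfolded subst_props_def, THEN conjunct2, THEN conjunct1] assms(2) by (rule bspec)
lemma sp_E2: assumes "subst_props D \<Gamma> A l0 S0 S" "\<gamma> \<in> \<Gamma>" "P \<in> patches A \<Gamma>"
  shows "S (act \<gamma> P) = act (D l0 \<gamma>) (S P)"
proof -
  have "\<forall>\<gamma>\<in>\<Gamma>. \<forall>P\<in>patches A \<Gamma>.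
        dom (S (act \<gamma> P)) = (+) (D l0 \<gamma>) ` dom (S P) \<and> S (act \<gamma> P) = act (D l0 \<gamma>) (S P)"
    using assms(1)[unfolded subst_props_def, THEN conjunct2, THEN conjunct2, THEN conjunct1] .
  thus ?thesis using assms(2,3) by simp
qed
lemma sp_E3:
  assumes "subst_props D \<Gamma> A l0 S0 S" "\<forall>M\<in>Ms. M \<subseteq> \<Gamma>" "P \<in> patches_on A (\<Union>Ms)"
  shows "dom (S P) = (\<Union>M\<in>Ms. dom (S (P |` M)))"
    "\<forall>M\<in>Ms. \<forall>\<gamma>\<in>dom (S (P |` M)). S P \<gamma> = S (P |` M) \<gamma>"
proof -
  have X: "\<forall>Ms. (\<forall>M\<in>Ms. M \<subseteq> \<Gamma>) \<longrightarrow>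
        (\<forall>P\<in>patches_on A (\<Union>Ms).
           dom (S P) = (\<Union>M\<in>Ms. dom (S (P |` M))) \<and>
           (\<forall>M\<in>Ms. \<forall>\<gamma>\<in>dom (S (P |` M)). S P \<gamma> = S (P |` M) \<gamma>))"
    using assms(1)[unfolded subst_props_def, THEN conjunct2, THEN conjunct2, THEN conjunct2] .
  have "dom (S P) = (\<Union>M\<in>Ms. dom (S (P |` M))) \<and>
           (\<forall>M\<in>Ms. \<forall>\<gamma>\<in>dom (S (P |` M)). S P \<gamma> = S (P |` M) \<gamma>)"
    using mp[OF spec[OF X, of Ms] assms(2)] assms(3) by (rule bspec)
  thus "dom (S P) = (\<Union>M\<in>Ms. dom (S (P |` M)))"
    "\<forall>M\<in>Ms. \<forall>\<gamma>\<in>dom (S (P |` M)). S P \<gamma> = S (P |` M) \<gamma>" by (rule conjunct1, rule conjunct2)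
qed

lemma uniq:
  assumes "0 \<in> \<Gamma>" "subst_props D \<Gamma> A l0 S0 S1" "subst_props D \<Gamma> A l0 S0 S2" "P \<in> patches A \<Gamma>"
  shows "S1 P = S2 P"
proof -
  have dP: "dom P \<subseteq> \<Gamma>" using assms(4) unfolding patches_def by auto
  have single: "S1 (P |` {\<eta>}) = S2 (P |` {\<eta>})" if e: "\<eta> \<in> dom P" for \<eta>
  proof -
    obtain a where a: "P \<eta> = Some a" using e by auto
    have aA: "a \<in> A" using a assms(4) unfolding patches_def ran_def by auto
    have sp: "single_patch a \<in> patches A \<Gamma>" unfolding patches_def single_patch_def using assms(1) aA by auto
    have eq: "P |` {\<eta>} = act \<eta> (single_patch a)"
    proof
      fix x show "(P |` {\<eta>}) x = act \<eta> (single_patch a) x"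
        using a by (auto simp: act_def single_patch_def restrict_map_def add_eq_0_iff)
    qed
    have g: "\<eta> \<in> \<Gamma>" using e dP by auto
    have "S1 (P |` {\<eta>}) = act (D l0 \<eta>) (S0 a)"
      unfolding eq sp_E2[OF assms(2) g sp] sp_E1[OF assms(2) aA] ..
    also have "\<dots> = S2 (P |` {\<eta>})"
      unfolding eq sp_E2[OF assms(3) g sp] sp_E1[OF assms(3) aA] ..
    finally show ?thesis .
  qed
  define Ms where "Ms = (\<lambda>\<eta>. {\<eta>}) ` dom P"
  have Ms: "\<forall>M\<in>Ms. M \<subseteq> \<Gamma>" using dP unfolding Ms_def by auto
  have PM: "P \<in> patches_on A (\<Union>Ms)" using assms(4) unfolding Ms_def patches_def patches_on_def by auto
  note E1 = sp_E3[OF assms(2) Ms PM]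
  note E2 = sp_E3[OF assms(3) Ms PM]
  have eqM: "S1 (P |` M) = S2 (P |` M)" if "M \<in> Ms" for M using single that unfolding Ms_def by auto
  have dom: "dom (S1 P) = dom (S2 P)" unfolding E1(1) E2(1) using eqM by simp
  show ?thesis
  proof
    fix x show "S1 P x = S2 P x"
    proof (cases "x \<in> dom (S1 P)")
      case True
      then obtain M where M: "M \<in> Ms" "x \<in> dom (S1 (P |` M))" using E1(1) by auto
      have "S1 P x = S1 (P |` M) x" using E1(2) M by blast
      also have "\<dots> = S2 (P |` M) x" using eqM[OF M(1)] by simp
      also have "\<dots> = S2 P x" using E2(2) M eqM[OF M(1)] by simp
      finally show ?thesis .
    next
      case False
      hence "x \<notin> dom (S2 P)" using dom by simp
      thus ?thesis using False by (simp add: domIff)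
    qed
  qed
qed

lemma iter:
  assumes "subst_props D \<Gamma> A l0 S0 S" "D l0 ` \<Gamma> \<subseteq> \<Gamma>" "P \<in> patches A \<Gamma>" "\<gamma> \<in> \<Gamma>"
  shows "(S ^^ n) (act \<gamma> P) = act ((D l0 ^^ n) \<gamma>) ((S ^^ n) P)"
proof -
  have pat: "(S ^^ n) P \<in> patches A \<Gamma>" for n
    by (induction n) (use assms(3) sp_pat[OF assms(1)] in auto)
  have gam: "(D l0 ^^ n) \<gamma> \<in> \<Gamma>" for n
    by (induction n) (use assms(2,4) in auto)
  show ?thesis
  proof (induction n)
    case (Suc n)
    then show ?case using sp_E2[OF assms(1) gam[of n] pat[of n]] by simp
  qed simp
qed

theorem proposition2:
  fixes D :: "real \<Rightarrow> 'g::{metric_space,group_add} \<Rightarrow> 'g"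
    and \<Gamma> V :: "'g set"
    and A :: "'a set" and l0 :: real
    and S0 :: "'a \<Rightarrow> 'g \<Rightarrow> 'a option"
  assumes "substitution_datum D \<Gamma> V A l0 S0"
  shows "\<exists>S. subst_props D \<Gamma> A l0 S0 S
           \<and> (\<forall>S'. subst_props D \<Gamma> A l0 S0 S' \<longrightarrow> (\<forall>P\<in>patches A \<Gamma>. S' P = S P))
           \<and> (\<forall>P\<in>patches A \<Gamma>. S P = construction D \<Gamma> V l0 S0 P)
           \<and> (\<forall>P\<in>patches A \<Gamma>. \<forall>\<gamma>\<in>\<Gamma>. \<forall>n::nat.
                (S ^^ n) (act \<gamma> P) = act ((D l0 ^^ n) \<gamma>) ((S ^^ n) P))
           \<and> (\<forall>P\<in>patches_on A \<Gamma>. S P \<in> patches_on A \<Gamma>)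
           \<and> continuous_map (config_topology A \<Gamma>) (config_topology A \<Gamma>)
               (pts_of \<Gamma> \<circ> S \<circ> cfg_of \<Gamma>)"
proof -
  have sd: "dilation_datum D \<Gamma> V"
    "\<exists>rm rp. 0 < rm \<and> rm < rp \<and> ball 0 rm \<subseteq> V \<and> V \<subseteq> ball 0 rp \<and> l0 > 1 + rp / rm"
    "D l0 ` \<Gamma> \<subseteq> \<Gamma>" "\<forall>a\<in>A. S0 a \<in> patches_on A (D l0 ` V \<inter> \<Gamma>)"
    using assms unfolding substitution_datum_def by auto
  have dd: "\<forall>l>0. bij (D l) \<and> (\<forall>x y. D l (x + y) = D l x + D l y)
            \<and> continuous_on UNIV (D l) \<and> continuous_on UNIV (inv (D l))"
    "uniform_lattice \<Gamma>" "\<forall>g. \<exists>!\<gamma>. \<gamma> \<in> \<Gamma> \<and> g \<in> (+) \<gamma> ` V"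
    using sd(1) unfolding dilation_datum_def by auto
  have ul: "0 \<in> \<Gamma>" "\<forall>x\<in>\<Gamma>. \<forall>y\<in>\<Gamma>. x + y \<in> \<Gamma>" "\<forall>x\<in>\<Gamma>. - x \<in> \<Gamma>"
    using dd(2) unfolding uniform_lattice_def by auto
  obtain rm rp where r: "0 < rm" "rm < rp" "l0 > 1 + rp / rm" using sd(2) by blast
  have "rp / rm > 0" using r by simp
  hence l0: "l0 > 0" using r by linarith
  have hom: "bij (D l0)" "\<And>x y. D l0 (x + y) = D l0 x + D l0 y" using dd(1) l0 by blast+
  interpret sd "D l0" \<Gamma> V A S0
  proof
    show "\<And>x y. D l0 (x + y) = D l0 x + D l0 y" "bij (D l0)" using hom by blast+
    show "D l0 ` \<Gamma> \<subseteq> \<Gamma>" "0 \<in> \<Gamma>" using sd(3) ul(1) by blast+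
    show "\<And>x y. x \<in> \<Gamma> \<Longrightarrow> y \<in> \<Gamma> \<Longrightarrow> x + y \<in> \<Gamma>" "\<And>x. x \<in> \<Gamma> \<Longrightarrow> - x \<in> \<Gamma>"
      using ul by blast+
    show "\<And>g. \<exists>!\<gamma>. \<gamma> \<in> \<Gamma> \<and> g \<in> (+) \<gamma> ` V" using dd(3) by blast
    show "\<And>a. a \<in> A \<Longrightarrow> S0 a \<in> patches_on A (D l0 ` V \<inter> \<Gamma>)" using sd(4) by blast
  qed
  have cE: "construction D \<Gamma> V l0 S0 = constr"
    by (rule ext) (simp add: construction_def constr_def)
  have props: "subst_props D \<Gamma> A l0 S0 constr"
    unfolding subst_props_def
  proof (intro conjI ballI allI impI)
    show "constr P \<in> patches A \<Gamma>" if "P \<in> patches A \<Gamma>" for P using constr_patches[OF that] .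
    show "constr (single_patch a) = S0 a" if "a \<in> A" for a using E1[OF that] .
    show "constr (act \<gamma> P) = act (D l0 \<gamma>) (constr P)" if "\<gamma> \<in> \<Gamma>" "P \<in> patches A \<Gamma>" for \<gamma> P
      using E2[OF that] .
    thus "dom (constr (act \<gamma> P)) = (+) (D l0 \<gamma>) ` dom (constr P)" if "\<gamma> \<in> \<Gamma>" "P \<in> patches A \<Gamma>" for \<gamma> P
      using that by (simp add: dom_act)
    show "dom (constr P) = (\<Union>M\<in>Ms. dom (constr (P |` M)))"
      if "\<forall>M\<in>Ms. M \<subseteq> \<Gamma>" "P \<in> patches_on A (\<Union>Ms)" for Ms P using E3(1)[OF that] .
    show "constr P \<gamma> = constr (P |` M) \<gamma>"
      if "\<forall>M\<in>Ms. M \<subseteq> \<Gamma>" "P \<in> patches_on A (\<Union>Ms)" "M \<in> Ms" "\<gamma> \<in> dom (constr (P |` M))"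
      for Ms P M \<gamma> using E3(2)[OF that(1,2)] that(3,4) by blast
  qed
  show ?thesis
  proof (intro exI[of _ constr] conjI allI impI ballI)
    show "subst_props D \<Gamma> A l0 S0 constr" by (rule props)
    show "S' P = constr P" if "subst_props D \<Gamma> A l0 S0 S'" "P \<in> patches A \<Gamma>" for S' P
      using uniq[OF \<Gamma>0 that(1) props that(2)] .
    show "constr P = construction D \<Gamma> V l0 S0 P" for P using cE by simp
    show "(constr ^^ n) (act \<gamma> P) = act ((D l0 ^^ n) \<gamma>) ((constr ^^ n) P)"
      if "P \<in> patches A \<Gamma>" "\<gamma> \<in> \<Gamma>" for P \<gamma> n
      using iter[OF props D\<Gamma> that] .
    show "constr P \<in> patches_on A \<Gamma>" if "P \<in> patches_on A \<Gamma>" for P using full[OF that] .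
    show "continuous_map (config_topology A \<Gamma>) (config_topology A \<Gamma>) (pts_of \<Gamma> \<circ> constr \<circ> cfg_of \<Gamma>)"
      by (rule cont)
  qed
qed

end
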